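(* Under the hypotheses of the preceding statement (for every $\alpha\le1/10$, $r_1\ge r_0(\alpha)$, $m$ sufficiently large, $H$ an $(\alpha,r_1,m)$-good graph on $A\cup B$, $0\le r_2\le \alpha^5 r_1/\log r_1$, and $R\supseteq H$ an $(r_1+r_2)$-regular graph on $A\cup B$), the graph $R$ admits at least $$\left(\frac{r_1-r_2}{e^2}\right)^{(r_1-r_2)m}$$ distinct $1$-factorizations.
   Context: A graph $H=(A\cup B,E)$ is $(\alpha,r,m)$-good if: (G1) $H$ is an $r$-regular balanced bipartite graph with parts $A,B$, $|A|=|B|=m$; and (G2) every balanced bipartite subgraph $H'=(A'\cup B',E')$ of $H$ with $A'\subseteq A$, $B'\subseteq B$, $|A'|=|B'|\ge(1-\alpha)m$ and $\delta(H')\ge(1-2\alpha)r$ contains a perfect matching. A $1$-factorization is a partition of the edge set into perfect matchings. *)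

theory Defs
  imports Complex_Main
begin

definition bip_deg_A :: "('a \<times> 'b) set \<Rightarrow> 'a \<Rightarrow> nat" where
  "bip_deg_A E a = card {b. (a, b) \<in> E}"

definition bip_deg_B :: "('a \<times> 'b) set \<Rightarrow> 'b \<Rightarrow> nat" where
  "bip_deg_B E b = card {a. (a, b) \<in> E}"

definition bip_graph :: "'a set \<Rightarrow> 'b set \<Rightarrow> ('a \<times> 'b) set \<Rightarrow> bool" where
  "bip_graph A B E \<longleftrightarrow> finite A \<and> finite B \<and> E \<subseteq> A \<times> B"

definition bip_regular :: "'a set \<Rightarrow> 'b set \<Rightarrow> ('a \<times> 'b) set \<Rightarrow> nat \<Rightarrow> bool" where
  "bip_regular A B E r \<longleftrightarrow> bip_graph A B E \<and>
     (\<forall>a\<in>A. bip_deg_A E a = r) \<and> (\<forall>b\<in>B. bip_deg_B E b = r)"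

definition perfect_matching :: "'a set \<Rightarrow> 'b set \<Rightarrow> ('a \<times> 'b) set \<Rightarrow> ('a \<times> 'b) set \<Rightarrow> bool" where
  "perfect_matching A B E M \<longleftrightarrow> M \<subseteq> E \<and>
     (\<forall>a\<in>A. \<exists>!b. (a, b) \<in> M) \<and> (\<forall>b\<in>B. \<exists>!a. (a, b) \<in> M)"

definition good :: "real \<Rightarrow> nat \<Rightarrow> nat \<Rightarrow> 'a set \<Rightarrow> 'b set \<Rightarrow> ('a \<times> 'b) set \<Rightarrow> bool" where
  "good \<alpha> r m A B E \<longleftrightarrow>
     bip_regular A B E r \<and> card A = m \<and> card B = m \<and>
     (\<forall>A' B' E'. A' \<subseteq> A \<longrightarrow> B' \<subseteq> B \<longrightarrow> E' \<subseteq> E \<inter> (A' \<times> B') \<longrightarrow>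
        card A' = card B' \<longrightarrow> real (card A') \<ge> (1 - \<alpha>) * real m \<longrightarrow>
        (\<forall>a\<in>A'. real (bip_deg_A E' a) \<ge> (1 - 2 * \<alpha>) * real r) \<longrightarrow>
        (\<forall>b\<in>B'. real (bip_deg_B E' b) \<ge> (1 - 2 * \<alpha>) * real r) \<longrightarrow>
        (\<exists>M. perfect_matching A' B' E' M))"

definition one_factorizations :: "'a set \<Rightarrow> 'b set \<Rightarrow> ('a \<times> 'b) set \<Rightarrow> ('a \<times> 'b) set set set" where
  "one_factorizations A B E = {F. (\<forall>M\<in>F. M \<noteq> {} \<and> perfect_matching A B E M) \<and> \<Union>F = E \<and>
      (\<forall>M\<in>F. \<forall>M'\<in>F. M \<noteq> M' \<longrightarrow> M \<inter> M' = {})}"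

end

theory Submission
  imports Defs "HOL-Analysis.Convex" "HOL-Computational_Algebra.Fundamental_Theorem_Algebra"
begin

definition Lf :: "(nat \<Rightarrow> nat \<Rightarrow> real) \<Rightarrow> nat \<Rightarrow> nat \<Rightarrow> (nat \<Rightarrow> 'a::real_normed_field) \<Rightarrow> 'a" where
  "Lf a i r x = (\<Sum>j<i. of_real (a r j) * x j)"

definition DL :: "nat \<Rightarrow> nat \<Rightarrow> nat list set" where
  "DL n l = {ts. distinct ts \<and> length ts = l \<and> set ts \<subseteq> {..<n}}"

definition wt :: "(nat \<Rightarrow> nat \<Rightarrow> real) \<Rightarrow> nat \<Rightarrow> nat list \<Rightarrow> real" where
  "wt a i ts = (\<Prod>k<length ts. a (ts!k) (i+k))"

definition pp :: "(nat \<Rightarrow> nat \<Rightarrow> real) \<Rightarrow> nat \<Rightarrow> nat \<Rightarrow> (nat \<Rightarrow> 'a::real_normed_field) \<Rightarrow> 'a" where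
  "pp a n i x = (\<Sum>ts\<in>DL n (n-i). of_real (wt a i ts) * (\<Prod>r\<in>{..<n} - set ts. Lf a i r x))"

definition PP :: "(nat \<Rightarrow> nat \<Rightarrow> real) \<Rightarrow> nat \<Rightarrow> nat \<Rightarrow> (nat \<Rightarrow> 'a::real_normed_field) \<Rightarrow> 'a poly" where
  "PP a n i x = (\<Sum>ts\<in>DL n (n-i). [:of_real (wt a i ts):] *
       (\<Prod>r\<in>{..<n} - set ts. [:Lf a (i-1) r x, of_real (a r (i-1)):]))"

lemma finite_DL: "finite (DL n l)"
proof -
  have "DL n l \<subseteq> {xs. set xs \<subseteq> {..<n} \<and> length xs = l}" unfolding DL_def by auto
  moreover have "finite {xs. set xs \<subseteq> {..<n} \<and> length xs = l}"
    by (rule finite_lists_length_eq) simp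
  ultimately show ?thesis by (rule finite_subset)
qed

lemma DL_nonempty: "l \<le> n \<Longrightarrow> [0..<l] \<in> DL n l"
  unfolding DL_def by auto

lemma card_rest: assumes "ts \<in> DL n l" shows "card ({..<n} - set ts) = n - l"
proof -
  have "card (set ts) = l" using assms unfolding DL_def by (auto simp: distinct_card)
  then show ?thesis using assms unfolding DL_def by (simp add: card_Diff_subset)
qed

lemma Lf_upd_Suc:
  "Lf a (Suc k) r (x(k := t)) = Lf a k r x + of_real (a r k) * t"
proof -
  have "(\<Sum>j<k. of_real (a r j) * (x(k:=t)) j) = Lf a k r x"
    unfolding Lf_def by (rule sum.cong) auto
  then show ?thesis unfolding Lf_def[of a "Suc k"] by simp
qed

lemma Lf_upd:
  assumes "i \<ge> 1"
  shows "Lf a i r (x(i-1 := t)) = Lf a (i-1) r x + of_real (a r (i-1)) * t"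
proof -
  obtain k where k: "i = Suc k" using assms by (cases i) auto
  show ?thesis unfolding k diff_Suc_1 by (rule Lf_upd_Suc)
qed

lemma coeff_prod_lin1:
  fixes \<alpha> \<beta> :: "nat \<Rightarrow> 'a::field"
  assumes "finite S"
  shows "coeff (\<Prod>r\<in>S. [:\<alpha> r, \<beta> r:]) 1 = (\<Sum>r\<in>S. \<beta> r * (\<Prod>s\<in>S-{r}. \<alpha> s))"
proof -
  have "coeff (\<Prod>r\<in>S. [:\<alpha> r, \<beta> r:]) 1 = poly (pderiv (\<Prod>r\<in>S. [:\<alpha> r, \<beta> r:])) 0"
    by (simp add: poly_0_coeff_0 coeff_pderiv)
  also have "\<dots> = (\<Sum>r\<in>S. \<beta> r * (\<Prod>s\<in>S-{r}. \<alpha> s))"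
    unfolding pderiv_prod poly_sum poly_mult poly_prod
    by (rule sum.cong) (auto simp: pderiv_pCons)
  finally show ?thesis .
qed

lemma coeff_prod_lin1':
  fixes \<alpha> \<beta> :: "nat \<Rightarrow> 'a::field"
  assumes "finite S"
  shows "coeff (\<Prod>r\<in>S. [:\<alpha> r, \<beta> r:]) (Suc 0) = (\<Sum>r\<in>S. \<beta> r * (\<Prod>s\<in>S-{r}. \<alpha> s))"
  using coeff_prod_lin1[OF assms] by simp

lemma poly_PP:
  assumes "i \<ge> 1"
  shows "poly (PP a n i x) t = pp a n i (x(i-1 := t))"
  unfolding PP_def pp_def poly_sum poly_prod poly_mult
  using Lf_upd[OF assms, of a _ x t]
  by (intro sum.cong refl arg_cong2[where f="(*)"] prod.cong) (auto simp: mult.commute)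

lemma sum_DL_Suc:
  "(\<Sum>ts'\<in>DL n (Suc l). f ts') = (\<Sum>ts\<in>DL n l. \<Sum>r\<in>{..<n} - set ts. f (r # ts))"
proof -
  have "(\<Sum>ts\<in>DL n l. \<Sum>r\<in>{..<n} - set ts. f (r # ts)) =
        (\<Sum>(ts,r)\<in>Sigma (DL n l) (\<lambda>ts. {..<n} - set ts). f (r # ts))"
    by (rule sum.Sigma) (auto simp: finite_DL)
  also have "\<dots> = (\<Sum>ts'\<in>DL n (Suc l). f ts')"
  proof -
    have bij: "bij_betw (\<lambda>x. snd x # fst x) (Sigma (DL n l) (\<lambda>ts. {..<n} - set ts)) (DL n (Suc l))"
    proof (rule bij_betwI[where g="\<lambda>ts'. (tl ts', hd ts')"])
      show "(\<lambda>x. snd x # fst x) \<in> Sigma (DL n l) (\<lambda>ts. {..<n} - set ts) \<rightarrow> DL n (Suc l)"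
        by (auto simp: DL_def)
      show "(\<lambda>ts'. (tl ts', hd ts')) \<in> DL n (Suc l) \<rightarrow> Sigma (DL n l) (\<lambda>ts. {..<n} - set ts)"
      proof
        fix ts' assume "ts' \<in> DL n (Suc l)"
        then obtain r ts where "ts' = r # ts" "distinct (r#ts)" "length ts = l" "set (r#ts) \<subseteq> {..<n}"
          unfolding DL_def by (cases ts') auto
        then show "(tl ts', hd ts') \<in> Sigma (DL n l) (\<lambda>ts. {..<n} - set ts)"
          by (auto simp: DL_def)
      qed
      show "\<And>x. x \<in> Sigma (DL n l) (\<lambda>ts. {..<n} - set ts) \<Longrightarrow> (tl (snd x # fst x), hd (snd x # fst x)) = x"
        by auto
      show "\<And>y. y \<in> DL n (Suc l) \<Longrightarrow> snd (tl y, hd y) # fst (tl y, hd y) = y"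
        by (auto simp: DL_def) (metis length_Suc_conv list.collapse list.discI)
    qed
    show ?thesis using sum.reindex_bij_betw[OF bij, of f] by (simp add: case_prod_unfold)
  qed
  finally show ?thesis by simp
qed

lemma wt_Cons: "i \<ge> 1 \<Longrightarrow> wt a (i-1) (r # ts) = a r (i-1) * wt a i ts"
  by (simp only: wt_def length_Cons prod.lessThan_Suc_shift) simp

lemma wt_Cons': "i \<ge> 1 \<Longrightarrow> wt a (i - Suc 0) (r # ts) = a r (i - Suc 0) * wt a i ts"
  using wt_Cons by simp

lemma coeff_PP1:
  assumes "1 \<le> i" "i \<le> n"
  shows "coeff (PP a n i x) 1 = pp a n (i-1) x"
proof -
  have nl: "n - (i-1) = Suc (n - i)" using assms by simp
  have "coeff (PP a n i x) 1 = (\<Sum>ts\<in>DL n (n-i). of_real (wt a i ts) *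
      (\<Sum>r\<in>{..<n} - set ts. of_real (a r (i-1)) * (\<Prod>s\<in>{..<n} - set ts - {r}. Lf a (i-1) s x)))"
    unfolding PP_def coeff_sum
    by (rule sum.cong[OF refl]) (simp add: coeff_prod_lin1')
  also have "\<dots> = (\<Sum>ts\<in>DL n (n-i). \<Sum>r\<in>{..<n} - set ts.
      of_real (wt a (i-1) (r#ts)) * (\<Prod>s\<in>{..<n} - set (r#ts). Lf a (i-1) s x))"
  proof (rule sum.cong[OF refl])
    fix ts assume "ts \<in> DL n (n-i)"
    show "of_real (wt a i ts) *
      (\<Sum>r\<in>{..<n} - set ts. of_real (a r (i-1)) * (\<Prod>s\<in>{..<n} - set ts - {r}. Lf a (i-1) s x)) =
      (\<Sum>r\<in>{..<n} - set ts. of_real (wt a (i-1) (r#ts)) * (\<Prod>s\<in>{..<n} - set (r#ts). Lf a (i-1) s x))"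
      unfolding sum_distrib_left
    proof (rule sum.cong[OF refl])
      fix r
      have e: "{..<n} - set (r#ts) = {..<n} - set ts - {r}" by auto
      show "of_real (wt a i ts) * (of_real (a r (i-1)) * (\<Prod>s\<in>{..<n} - set ts - {r}. Lf a (i-1) s x)) =
        of_real (wt a (i-1) (r#ts)) * (\<Prod>s\<in>{..<n} - set (r#ts). Lf a (i-1) s x)"
        unfolding e wt_Cons[OF assms(1)] of_real_mult by (simp only: mult_ac)
    qed
  qed
  also have "\<dots> = pp a n (i-1) x"
    unfolding pp_def nl sum_DL_Suc ..
  finally show ?thesis .
qed


lemma prod_lin_top:
  fixes \<alpha> \<beta> :: "nat \<Rightarrow> 'a::field"
  assumes "finite S"
  shows "degree (\<Prod>r\<in>S. [:\<alpha> r, \<beta> r:]) \<le> card S \<and> coeff (\<Prod>r\<in>S. [:\<alpha> r, \<beta> r:]) (card S) = (\<Prod>r\<in>S. \<beta> r)"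
  using assms
proof (induction S rule: finite_induct)
  case empty
  then show ?case by simp
next
  case (insert s S)
  let ?Q = "\<Prod>r\<in>S. [:\<alpha> r, \<beta> r:]"
  have eq: "(\<Prod>r\<in>insert s S. [:\<alpha> r, \<beta> r:]) = [:\<alpha> s, \<beta> s:] * ?Q"
    using insert by simp
  have d: "degree ([:\<alpha> s, \<beta> s:] * ?Q) \<le> card (insert s S)"
  proof -
    have "degree [:\<alpha> s, \<beta> s:] \<le> 1" by simp
    then show ?thesis using insert degree_mult_le[of "[:\<alpha> s, \<beta> s:]" ?Q] by simp
  qed
  have c0: "coeff ?Q (Suc (card S)) = 0"
    using insert.IH by (intro coeff_eq_0) simp
  have "coeff ([:\<alpha> s, \<beta> s:] * ?Q) (Suc (card S)) = \<alpha> s * coeff ?Q (Suc (card S)) + \<beta> s * coeff ?Q (card S)"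
    by (simp add: mult_pCons_left coeff_pCons)
  then have "coeff ([:\<alpha> s, \<beta> s:] * ?Q) (card (insert s S)) = \<beta> s * (\<Prod>r\<in>S. \<beta> r)"
    using insert c0 by simp
  then show ?case using d eq insert by simp
qed

lemma pp_hom:
  assumes "i \<le> n"
  shows "pp a n i (\<lambda>j. c * x j) = c ^ i * pp a n i x"
proof -
  have L: "Lf a i r (\<lambda>j. c * x j) = c * Lf a i r x" for r
    unfolding Lf_def by (simp add: sum_distrib_left mult.left_commute)
  show ?thesis unfolding pp_def sum_distrib_left
  proof (rule sum.cong[OF refl])
    fix ts assume ts: "ts \<in> DL n (n-i)"
    have "(\<Prod>r\<in>{..<n} - set ts. Lf a i r (\<lambda>j. c * x j)) = c ^ card ({..<n} - set ts) * (\<Prod>r\<in>{..<n} - set ts. Lf a i r x)"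
      unfolding L by (simp add: prod.distrib)
    also have "card ({..<n} - set ts) = i" using card_rest[OF ts] assms by simp
    finally show "of_real (wt a i ts) * (\<Prod>r\<in>{..<n} - set ts. Lf a i r (\<lambda>j. c * x j)) =
         c ^ i * (of_real (wt a i ts) * (\<Prod>r\<in>{..<n} - set ts. Lf a i r x))"
      by (simp add: mult_ac)
  qed
qed

lemma pp_of_real: "pp a n i (\<lambda>j. of_real (y j)) = (of_real (pp a n i y) :: 'a::real_normed_field)"
  unfolding pp_def Lf_def by (simp add: of_real_sum of_real_prod)

definition zc :: "(nat \<Rightarrow> nat \<Rightarrow> real) \<Rightarrow> nat \<Rightarrow> nat \<Rightarrow> nat \<Rightarrow> real" where
  "zc a c = (\<lambda>r c'. if c' = c then 0 else a r c')"

lemma pp_zc: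
  assumes "i \<ge> 1"
  shows "pp (zc a (i-1)) n i x = pp a n i (x(i-1 := 0))"
proof -
  have w: "wt (zc a (i-1)) i ts = wt a i ts" for ts
    unfolding wt_def zc_def using assms by (intro prod.cong) auto
  have L: "Lf (zc a (i-1)) i r x = Lf a i r (x(i-1 := 0))" for r
    unfolding Lf_def zc_def by (intro sum.cong) auto
  show ?thesis unfolding pp_def w L ..
qed

lemma pp_n: "pp a n n x = (\<Prod>r<n. Lf a n r x)"
proof -
  have "DL n 0 = {[]}" unfolding DL_def by auto
  then show ?thesis unfolding pp_def by (simp add: wt_def)
qed

lemma pp_0: "pp a n 0 x = of_real (\<Sum>ts\<in>DL n n. wt a 0 ts)"
proof -
  have "set ts = {..<n}" if "ts \<in> DL n n" for ts
  proof -
    have d: "distinct ts" "length ts = n" "set ts \<subseteq> {..<n}" using that unfolding DL_def by auto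
    then have "card (set ts) = card {..<n}" by (simp add: distinct_card)
    then show ?thesis using d(3) by (intro card_subset_eq) auto
  qed
  then show ?thesis unfolding pp_def by (simp add: of_real_sum)
qed

lemma PP_top:
  assumes "1 \<le> i" "i \<le> n"
  shows "degree (PP a n i x) \<le> i \<and>
    coeff (PP a n i x) i = of_real (\<Sum>ts\<in>DL n (n-i). wt a i ts * (\<Prod>r\<in>{..<n} - set ts. a r (i-1)))"
proof -
  let ?Q = "\<lambda>ts. \<Prod>r\<in>{..<n} - set ts. [:Lf a (i-1) r x, of_real (a r (i-1)):]"
  have top: "degree (?Q ts) \<le> i \<and> coeff (?Q ts) i = (\<Prod>r\<in>{..<n} - set ts. of_real (a r (i-1)))"
    if "ts \<in> DL n (n-i)" for ts
    using prod_lin_top[of "{..<n} - set ts" "\<lambda>r. Lf a (i-1) r x" "\<lambda>r. of_real (a r (i-1))"]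
      card_rest[OF that] assms by simp
  have "degree (PP a n i x) \<le> i"
    unfolding PP_def
    by (rule degree_sum_le) (auto intro: order.trans[OF degree_mult_le] simp: top[simplified] finite_DL)
  moreover have "coeff (PP a n i x) i = (\<Sum>ts\<in>DL n (n-i). of_real (wt a i ts) * (\<Prod>r\<in>{..<n} - set ts. of_real (a r (i-1))))"
    unfolding PP_def coeff_sum by (intro sum.cong refl) (simp add: top[simplified])
  ultimately show ?thesis by (simp add: of_real_sum of_real_prod)
qed


lemma logderiv_pos:
  fixes P :: "complex poly"
  assumes "P \<noteq> 0" "\<And>r. poly P r = 0 \<Longrightarrow> Re r < 0" "degree P \<ge> 1"
  shows "Re (coeff P 1 / coeff P 0) > 0"
  using assms
proof (induction "degree P" arbitrary: P rule: less_induct)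
  case less
  have "\<not> constant (poly P)" using less.prems(3) constant_degree[of P] by simp
  then obtain r where r: "poly P r = 0" using fundamental_theorem_of_algebra by blast
  then have "[:-r, 1:] dvd P" by (simp add: poly_eq_0_iff_dvd)
  then obtain Q where PQ: "P = [:-r, 1:] * Q" by (elim dvdE)
  have Q0: "Q \<noteq> 0" using less.prems(1) PQ by auto
  have "degree P = degree [:-r, 1:] + degree Q" unfolding PQ
    by (rule degree_mult_eq) (use Q0 in auto)
  then have dQ: "degree P = Suc (degree Q)" by simp
  have rneg: "Re r < 0" using less.prems(2) r by blast
  then have rnz: "r \<noteq> 0" by auto
  have Qroots: "\<And>z. poly Q z = 0 \<Longrightarrow> Re z < 0" using less.prems(2) PQ by auto
  have q0: "coeff Q 0 \<noteq> 0"
  proof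
    assume "coeff Q 0 = 0"
    then have "poly Q 0 = 0" by (simp add: poly_0_coeff_0)
    then show False using Qroots[of 0] by simp
  qed
  have c0: "coeff P 0 = - r * coeff Q 0" using PQ by (simp add: mult_pCons_left)
  have c1: "coeff P 1 = coeff Q 0 - r * coeff Q 1" using PQ by (simp add: mult_pCons_left coeff_pCons)
  have ratio: "coeff P 1 / coeff P 0 = - 1 / r + coeff Q 1 / coeff Q 0"
    unfolding c0 c1 using rnz q0 by (simp add: field_simps)
  have A: "Re (- 1 / r) > 0"
  proof -
    have "Re (- 1 / r) = - Re r / ((Re r)\<^sup>2 + (Im r)\<^sup>2)" by (simp add: Re_divide)
    moreover have "(Re r)\<^sup>2 + (Im r)\<^sup>2 > 0" using rneg by (simp add: add_pos_nonneg)
    ultimately show ?thesis using rneg by (simp add: divide_neg_pos)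
  qed
  show ?case
  proof (cases "degree Q = 0")
    case True
    then have "coeff Q 1 = 0" by (simp add: coeff_eq_0)
    then show ?thesis using ratio A by simp
  next
    case False
    then have "Re (coeff Q 1 / coeff Q 0) > 0"
      using less.hyps[of Q] dQ Q0 Qroots by simp
    then show ?thesis using ratio A by simp
  qed
qed

lemma small_eps:
  fixes p c :: "nat \<Rightarrow> real"
  assumes "\<forall>j<i. p j > 0"
  shows "\<exists>\<epsilon>>0. \<forall>j<i. p j + \<epsilon> * c j > 0"
  using assms
proof (induction i)
  case 0
  then show ?case by (intro exI[of _ 1]) simp
next
  case (Suc i)
  then obtain \<epsilon> where e: "\<epsilon> > 0" "\<forall>j<i. p j + \<epsilon> * c j > 0" by auto
  define \<delta> where "\<delta> = min \<epsilon> (p i / (2 * (\<bar>c i\<bar> + 1)))"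
  have pi: "p i > 0" using Suc.prems by auto
  have dpos: "\<delta> > 0" unfolding \<delta>_def using e pi by simp
  have dle: "\<delta> \<le> \<epsilon>" unfolding \<delta>_def by simp
  have "p j + \<delta> * c j > 0" if j: "j < Suc i" for j
  proof (cases "j < i")
    case True
    have pj: "p j > 0" using Suc.prems True by auto
    have "p j + \<delta> * c j = (1 - \<delta>/\<epsilon>) * p j + (\<delta>/\<epsilon>) * (p j + \<epsilon> * c j)"
      using e(1) by (simp add: field_simps)
    moreover have "(1 - \<delta>/\<epsilon>) * p j \<ge> 0" using dle e(1) pj by (simp add: field_simps)
    moreover have "(\<delta>/\<epsilon>) * (p j + \<epsilon> * c j) > 0" using dpos e True by simp
    ultimately show ?thesis by linarith
  next
    case False
    then have ji: "j = i" using j by simp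
    have "\<delta> * \<bar>c i\<bar> \<le> p i / (2 * (\<bar>c i\<bar> + 1)) * \<bar>c i\<bar>"
      unfolding \<delta>_def by (intro mult_right_mono) auto
    also have "\<dots> \<le> p i / 2"
      using pi by (simp add: field_simps)
    finally have "\<bar>\<delta> * c i\<bar> \<le> p i / 2" using dpos by (simp add: abs_mult)
    then show ?thesis using ji pi by (simp add: abs_le_iff)
  qed
  then show ?case using dpos by blast
qed

definition stab :: "(nat \<Rightarrow> nat \<Rightarrow> real) \<Rightarrow> nat \<Rightarrow> nat \<Rightarrow> bool" where
  "stab a n i \<longleftrightarrow> (\<forall>z::nat \<Rightarrow> complex. (\<forall>j<i. Re (z j) > 0) \<longrightarrow> pp a n i z \<noteq> 0)"

definition Cond :: "nat \<Rightarrow> nat \<Rightarrow> (nat \<Rightarrow> nat \<Rightarrow> real) \<Rightarrow> bool" where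
  "Cond n i b \<longleftrightarrow> (\<forall>r c. b r c \<ge> 0) \<and> (\<forall>r<n. \<exists>j<i. b r j > 0) \<and> (\<forall>r<n. \<forall>c. i \<le> c \<and> c < n \<longrightarrow> b r c > 0)"

lemma stab_rot:
  assumes "stab a n i" "i \<le> n" "pp a n i z = 0" "\<forall>j<i. Re (l * z j) > 0"
  shows False
proof -
  have "pp a n i (\<lambda>j. l * z j) = l ^ i * pp a n i z" by (rule pp_hom[OF assms(2)])
  also have "\<dots> = 0" using assms(3) by simp
  finally have e: "pp a n i (\<lambda>j. l * z j) = 0" .
  have "pp a n i (\<lambda>j. l * z j) \<noteq> 0"
    using assms(1) unfolding stab_def using assms(4) by (elim allE[of _ "\<lambda>j. l * z j"]) simp
  then show False using e by simp
qed

lemma Re_Lf: "Re (Lf b i r z) = (\<Sum>j<i. b r j * Re (z j))"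
  unfolding Lf_def by (simp add: Re_sum)

lemma stab_base:
  assumes "Cond n n b"
  shows "stab b n n"
  unfolding stab_def
proof (intro allI impI)
  fix z :: "nat \<Rightarrow> complex" assume z: "\<forall>j<n. Re (z j) > 0"
  have "Lf b n r z \<noteq> 0" if r: "r < n" for r
  proof -
    obtain j where j: "j < n" "b r j > 0" using assms r unfolding Cond_def by blast
    have "Re (Lf b n r z) > 0" unfolding Re_Lf
    proof (rule sum_pos2[of _ j])
      show "b r j * Re (z j) > 0" using j z by simp
      show "\<And>k. k \<in> {..<n} \<Longrightarrow> 0 \<le> b r k * Re (z k)"
        using assms z unfolding Cond_def by (simp add: less_imp_le)
    qed (use j in auto)
    then show ?thesis by auto
  qed
  then show "pp b n n z \<noteq> 0" unfolding pp_n by simp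
qed


lemma wt_pos:
  assumes "ts \<in> DL n (n - i)" "\<forall>r<n. \<forall>c. i \<le> c \<and> c < n \<longrightarrow> b r c > 0"
  shows "wt b i ts > 0"
  unfolding wt_def
proof (rule prod_pos)
  fix k assume k: "k \<in> {..<length ts}"
  have "ts ! k \<in> set ts" using assms(1) k unfolding DL_def by auto
  then have "ts ! k < n" using assms(1) unfolding DL_def by auto
  moreover have "i + k < n" using assms(1) k unfolding DL_def by auto
  ultimately show "b (ts ! k) (i + k) > 0" using assms(2) by simp
qed

lemma top_pos:
  assumes "Cond n i b" "i < n"
  shows "(\<Sum>ts\<in>DL n (n - Suc i). wt b (Suc i) ts * (\<Prod>r\<in>{..<n} - set ts. b r i)) > 0"
proof (rule sum_pos)
  show "finite (DL n (n - Suc i))" by (rule finite_DL)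
  show "DL n (n - Suc i) \<noteq> {}" using DL_nonempty[of "n - Suc i" n] by auto
  fix ts assume ts: "ts \<in> DL n (n - Suc i)"
  have "wt b (Suc i) ts > 0" using assms(1) by (intro wt_pos[OF ts]) (auto simp: Cond_def)
  moreover have "(\<Prod>r\<in>{..<n} - set ts. b r i) > 0" using assms unfolding Cond_def by (intro prod_pos) auto
  ultimately show "wt b (Suc i) ts * (\<Prod>r\<in>{..<n} - set ts. b r i) > 0" by simp
qed

lemma stab_step:
  assumes i1: "1 \<le> i" and "i < n" and st1: "stab b n (Suc i)" and st2: "stab (zc b i) n (Suc i)"
    and C: "Cond n i b"
  shows "stab b n i"
  unfolding stab_def
proof (intro allI impI)
  fix z :: "nat \<Rightarrow> complex" assume z: "\<forall>j<i. Re (z j) > 0"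
  define P where "P = PP b n (Suc i) z"
  have polyP: "poly P t = pp b n (Suc i) (z(i:=t))" for t
    unfolding P_def using poly_PP[of "Suc i" b n z t] by simp
  have "coeff P 0 = pp b n (Suc i) (z(i:=0))" using polyP[of 0] by (simp add: poly_0_coeff_0)
  also have "\<dots> = pp (zc b i) n (Suc i) (z(i:=1))" using pp_zc[of "Suc i" b n "z(i:=1)"] by simp
  finally have c0eq: "coeff P 0 = pp (zc b i) n (Suc i) (z(i:=1))" .
  have c0: "coeff P 0 \<noteq> 0"
  proof -
    have "\<forall>j<Suc i. Re ((z(i:=1)) j) > 0" using z by auto
    then show ?thesis using st2 unfolding stab_def c0eq by blast
  qed
  define S where "S = (\<Sum>ts\<in>DL n (n - Suc i). wt b (Suc i) ts * (\<Prod>r\<in>{..<n} - set ts. b r i))"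
  have Spos: "S > 0" unfolding S_def by (rule top_pos[OF C \<open>i < n\<close>])
  have top: "degree P \<le> Suc i" "coeff P (Suc i) = of_real S"
    using PP_top[of "Suc i" n b z] \<open>i < n\<close> unfolding P_def S_def by auto
  have Pnz: "P \<noteq> 0" using top Spos by auto
  have dP: "degree P = Suc i"
    using top Spos le_degree[of P "Suc i"] by (auto simp: le_antisym)
  have roots: "Re r < 0" if r: "poly P r = 0" for r
  proof (rule ccontr)
    assume "\<not> Re r < 0"
    then consider "Re r > 0" | "Re r = 0" by linarith
    then show False
    proof cases
      case 1
      have "\<forall>j<Suc i. Re ((z(i:=r)) j) > 0" using z 1 by auto
      then have "pp b n (Suc i) (z(i:=r)) \<noteq> 0" using st1 unfolding stab_def by blast
      then show False using r polyP by simp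
    next
      case 2
      have rnz: "r \<noteq> 0" using r c0 by (auto simp: poly_0_coeff_0)
      define v where "v = Im r"
      have vnz: "v \<noteq> 0" using rnz 2 unfolding v_def by (simp add: complex_eq_iff)
      have req: "r = \<i> * of_real v" using 2 unfolding v_def by (simp add: complex_eq_iff)
      obtain \<epsilon> where e: "\<epsilon> > 0" "\<forall>j<i. Re (z j) + \<epsilon> * (v * Im (z j)) > 0"
        using small_eps[of i "\<lambda>j. Re (z j)" "\<lambda>j. v * Im (z j)"] z by blast
      define l where "l = 1 - \<i> * of_real (\<epsilon> * v)"
      have "\<forall>j<Suc i. Re (l * (z(i:=r)) j) > 0"
      proof (intro allI impI)
        fix j assume "j < Suc i"
        then consider "j < i" | "j = i" by linarith
        then show "Re (l * (z(i:=r)) j) > 0"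
        proof cases
          case 1
          then show ?thesis using e(2) unfolding l_def by (simp add: algebra_simps)
        next
          case 2
          have "Re (l * r) = \<epsilon> * v * v" unfolding l_def req by (simp add: algebra_simps)
          also have "\<dots> > 0"
          proof -
            have "v * v > 0" using vnz by (auto simp: zero_less_mult_iff linorder_neq_iff)
            then show ?thesis using e(1) by (simp add: mult.assoc)
          qed
          finally show ?thesis using 2 by simp
        qed
      qed
      moreover have "pp b n (Suc i) (z(i:=r)) = 0" using r polyP by simp
      ultimately show False using stab_rot[OF st1, of "z(i:=r)" l] \<open>i < n\<close> by simp
    qed
  qed
  have "Re (coeff P 1 / coeff P 0) > 0"
    by (rule logderiv_pos) (use Pnz roots dP in auto)
  then have "coeff P 1 \<noteq> 0" by auto
  moreover have "coeff P 1 = pp b n i z"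
    unfolding P_def using coeff_PP1[of "Suc i" n b z] \<open>i < n\<close> by simp
  ultimately show "pp b n i z \<noteq> 0" by simp
qed

lemma stab_ind:
  assumes "k < n"
  shows "\<forall>b. Cond n (n-k) b \<longrightarrow> stab b n (n-k)"
  using assms
proof (induction k)
  case 0
  then show ?case using stab_base by simp
next
  case (Suc k)
  show ?case
  proof (intro allI impI)
    fix b assume C: "Cond n (n - Suc k) b"
    define i where "i = n - Suc k"
    have i1: "1 \<le> i" and ilt: "i < n" and si: "Suc i = n - k" using Suc.prems unfolding i_def by auto
    have C1: "Cond n (Suc i) b" using C unfolding Cond_def i_def
      by (metis less_SucI Suc_leD i_def)
    have C2: "Cond n (Suc i) (zc b i)" using C unfolding Cond_def zc_def i_def
      by (auto simp: le_less) (metis less_SucI less_irrefl i_def)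
    have "stab b n (Suc i)" "stab (zc b i) n (Suc i)"
      using Suc.IH Suc.prems C1 C2 si by auto
    then show "stab b n (n - Suc k)"
      using stab_step[OF i1 ilt] C unfolding i_def by simp
  qed
qed

lemma stab_pos:
  assumes "\<forall>r c. a r c > 0" "1 \<le> i" "i \<le> n"
  shows "stab a n i"
proof -
  have "Cond n (n - (n - i)) a" using assms unfolding Cond_def
    by (auto simp: less_imp_le intro!: exI[of _ 0])
  then show ?thesis using stab_ind[of "n - i" n] assms by auto
qed


lemma real_rooted:
  assumes pos: "\<forall>r c. a r c > 0" and i: "1 \<le> i" "i \<le> n"
    and y: "\<forall>j<i-1. y j > 0"
    and r: "poly (PP a n i (\<lambda>j. complex_of_real (y j))) r = 0"
  shows "Im r = 0 \<and> Re r \<le> 0"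
proof -
  define x where "x = (\<lambda>j. complex_of_real (y j))"
  have st: "stab a n i" by (rule stab_pos[OF pos i])
  have z: "pp a n i (x(i-1 := r)) = 0" using r poly_PP[OF i(1), of a n x r] unfolding x_def by simp
  show ?thesis
  proof (rule ccontr)
    assume "\<not> (Im r = 0 \<and> Re r \<le> 0)"
    then consider "Im r \<noteq> 0" | "Im r = 0" "Re r > 0" by linarith
    then show False
    proof cases
      case 1
      define v where "v = Im r"
      define \<epsilon> where "\<epsilon> = (\<bar>Re r\<bar> + 1) / (v * v)"
      have vv: "v * v > 0" using 1 unfolding v_def by (auto simp: zero_less_mult_iff linorder_neq_iff)
      define l where "l = 1 - \<i> * of_real (\<epsilon> * v)"
      have "\<forall>j<i. Re (l * (x(i-1:=r)) j) > 0"
      proof (intro allI impI)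
        fix j assume j: "j < i"
        show "Re (l * (x(i-1:=r)) j) > 0"
        proof (cases "j = i - 1")
          case True
          have "Re (l * r) = Re r + \<epsilon> * (v * v)" unfolding l_def v_def by (simp add: algebra_simps)
          also have "\<epsilon> * (v * v) = \<bar>Re r\<bar> + 1" unfolding \<epsilon>_def using 1 unfolding v_def by simp
          finally show ?thesis using True by simp
        next
          case False
          then have "j < i - 1" using j by simp
          then show ?thesis using False y unfolding l_def x_def by simp
        qed
      qed
      then show False using stab_rot[OF st i(2) z] by simp
    next
      case 2
      have "\<forall>j<i. Re ((x(i-1:=r)) j) > 0" using 2 y unfolding x_def by auto
      then show False using st z unfolding stab_def by blast
    qed
  qed
qed

lemma real_root_factor:
  fixes P :: "complex poly"
  assumes "\<And>r. poly P r = 0 \<Longrightarrow> Im r = 0 \<and> Re r < 0"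
  shows "\<exists>\<rho>::nat \<Rightarrow> real. (\<forall>j<degree P. \<rho> j > 0) \<and>
           P = smult (lead_coeff P) (\<Prod>j<degree P. [:of_real (\<rho> j), 1:])"
  using assms
proof (induction "degree P" arbitrary: P)
  case 0
  then show ?case by (auto elim!: degree_eq_zeroE)
next
  case (Suc d)
  have "\<not> constant (poly P)" using Suc.hyps(2) constant_degree[of P] by simp
  then obtain r where r: "poly P r = 0" using fundamental_theorem_of_algebra by blast
  then have "[:-r, 1:] dvd P" by (simp add: poly_eq_0_iff_dvd)
  then obtain Q where PQ: "P = [:-r, 1:] * Q" by (elim dvdE)
  have Q0: "Q \<noteq> 0" using Suc.hyps(2) PQ by auto
  have "degree P = degree [:-r, 1:] + degree Q" unfolding PQ
    by (rule degree_mult_eq) (use Q0 in auto)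
  then have dQ: "degree Q = d" using Suc.hyps(2) by simp
  have lc: "lead_coeff P = lead_coeff Q" unfolding PQ by (simp only: lead_coeff_mult) simp
  have Qroots: "\<And>z. poly Q z = 0 \<Longrightarrow> Im z = 0 \<and> Re z < 0" using Suc.prems PQ by auto
  obtain \<rho> where \<rho>: "\<forall>j<d. \<rho> j > 0" "Q = smult (lead_coeff Q) (\<Prod>j<d. [:of_real (\<rho> j), 1:])"
    using Suc.hyps(1)[OF dQ[symmetric] Qroots] dQ by auto
  define \<rho>' where "\<rho>' = \<rho>(d := - Re r)"
  have rr: "r = of_real (Re r)" "Re r < 0" using Suc.prems[OF r] by (auto simp: complex_eq_iff)
  have pr: "(\<Prod>j<Suc d. [:of_real (\<rho>' j), 1:]) = (\<Prod>j<d. [:of_real (\<rho> j), 1:]) * [:-r, 1:]"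
  proof -
    have "(\<Prod>j<d. [:complex_of_real (\<rho>' j), 1:]) = (\<Prod>j<d. [:of_real (\<rho> j), 1:])"
      unfolding \<rho>'_def by (intro prod.cong) auto
    moreover have "[:complex_of_real (\<rho>' d), 1:] = [:-r, 1:]"
      unfolding \<rho>'_def using rr(1) by (simp add: complex_eq_iff)
    ultimately show ?thesis by simp
  qed
  have "P = smult (lead_coeff P) (\<Prod>j<Suc d. [:of_real (\<rho>' j), 1:])"
    unfolding pr lc using \<rho>(2) PQ by (metis mult.commute mult_smult_left)
  moreover have "\<forall>j<Suc d. \<rho>' j > 0" using \<rho>(1) rr(2) unfolding \<rho>'_def by auto
  ultimately show ?case using Suc.hyps(2) by auto
qed

lemma one_plus_inv_pow: "d \<ge> 1 \<Longrightarrow> (1 + 1 / real d) ^ d \<le> exp 1"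
proof -
  assume d: "d \<ge> 1"
  have "(1 + 1 / real d) ^ d \<le> exp (1 / real d) ^ d"
    by (intro power_mono) (auto simp: exp_ge_add_one_self add_nonneg_nonneg)
  also have "\<dots> = exp (real d * (1 / real d))" by (rule exp_of_nat_mult[symmetric])
  also have "\<dots> = exp 1" using d by simp
  finally show ?thesis .
qed

lemma amgm_prod:
  fixes x :: "nat \<Rightarrow> real"
  assumes "d \<ge> 1" "\<forall>j<d. x j > 0"
  shows "(\<Prod>j<d. x j) \<le> ((\<Sum>j<d. x j) / d) ^ d"
proof -
  have "(\<Prod>j<d. x j) powr (1 / d) \<le> (\<Sum>j<d. x j / d)"
    using arith_geom_mean[of "{..<d}" x] assms by (auto simp: less_imp_le lessThan_empty_iff)
  also have "\<dots> = (\<Sum>j<d. x j) / d" by (simp add: sum_divide_distrib)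
  finally have A: "(\<Prod>j<d. x j) powr (1 / d) \<le> (\<Sum>j<d. x j) / d" .
  have pp: "(\<Prod>j<d. x j) > 0" using assms by (intro prod_pos) auto
  have "((\<Prod>j<d. x j) powr (1 / d)) ^ d = ((\<Prod>j<d. x j) powr (1 / d)) powr (real d)"
    using pp by (intro powr_realpow[symmetric]) (simp only: powr_gt_zero)
  also have "\<dots> = (\<Prod>j<d. x j) powr ((1 / d) * real d)" by (simp add: powr_powr)
  also have "\<dots> = (\<Prod>j<d. x j)" using assms(1) pp by simp
  finally have "(\<Prod>j<d. x j) = ((\<Prod>j<d. x j) powr (1 / d)) ^ d" by simp
  also have "\<dots> \<le> ((\<Sum>j<d. x j) / d) ^ d"
    by (intro power_mono A) simp
  finally show ?thesis .
qed

lemma univariate_bound: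
  fixes \<rho> :: "nat \<Rightarrow> real"
  assumes d: "d \<ge> 1" and c: "c > 0" and \<rho>: "\<forall>j<d. \<rho> j > 0"
    and M: "\<forall>t>0. c * (\<Prod>j<d. t + \<rho> j) \<ge> M * t"
  shows "c * (\<Prod>j<d. \<rho> j) * (\<Sum>j<d. 1 / \<rho> j) \<ge> M / exp 1"
proof -
  define P0 where "P0 = c * (\<Prod>j<d. \<rho> j)"
  define s where "s = (\<Sum>j<d. 1 / \<rho> j)"
  have P0: "P0 > 0" unfolding P0_def using c \<rho> by (intro mult_pos_pos prod_pos) auto
  have s: "s > 0" unfolding s_def using \<rho> d by (intro sum_pos) (auto simp: lessThan_empty_iff)
  define t where "t = 1 / s"
  have t: "t > 0" unfolding t_def using s by simp
  have "c * (\<Prod>j<d. t + \<rho> j) = P0 * (\<Prod>j<d. 1 + t / \<rho> j)"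
  proof -
    have "(\<Prod>j<d. t + \<rho> j) = (\<Prod>j<d. \<rho> j * (1 + t / \<rho> j))"
      using \<rho> by (intro prod.cong) (auto simp: field_simps)
    then show ?thesis unfolding P0_def by (simp add: prod.distrib)
  qed
  also have "\<dots> \<le> P0 * ((\<Sum>j<d. 1 + t / \<rho> j) / d) ^ d"
  proof -
    have "\<forall>j<d. 1 + t / \<rho> j > 0" using \<rho> t by (auto intro!: add_pos_pos)
    then show ?thesis using P0 by (intro mult_left_mono amgm_prod d) auto
  qed
  also have "(\<Sum>j<d. 1 + t / \<rho> j) / d = 1 + 1 / real d"
  proof -
    have "(\<Sum>j<d. 1 + t / \<rho> j) = d + t * s" unfolding s_def
      by (simp add: sum.distrib sum_distrib_left)
    then show ?thesis using d s unfolding t_def by (simp add: field_simps)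
  qed
  also have "P0 * (1 + 1 / real d) ^ d \<le> P0 * exp 1"
    using P0 one_plus_inv_pow[OF d] by simp
  finally have "M * t \<le> P0 * exp 1" using M t by (meson order.trans)
  then have "M \<le> P0 * s * exp 1" using s unfolding t_def by (simp add: field_simps)
  then show ?thesis unfolding P0_def s_def by (simp add: field_simps)
qed


lemma coeff_factored:
  fixes \<rho> :: "nat \<Rightarrow> real" and c :: real
  assumes "\<forall>j<d. \<rho> j > 0"
  defines "Q \<equiv> smult (complex_of_real c) (\<Prod>j<d. [:of_real (\<rho> j), 1:])"
  shows "poly Q (of_real t) = of_real (c * (\<Prod>j<d. t + \<rho> j))"
    and "coeff Q 1 = of_real (c * (\<Prod>j<d. \<rho> j) * (\<Sum>j<d. 1 / \<rho> j))"
proof -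
  show "poly Q (of_real t) = of_real (c * (\<Prod>j<d. t + \<rho> j))"
    unfolding Q_def by (simp add: poly_prod of_real_prod add.commute)
  have "coeff (\<Prod>j<d. [:complex_of_real (\<rho> j), 1:]) 1 = (\<Sum>r<d. 1 * (\<Prod>s\<in>{..<d}-{r}. complex_of_real (\<rho> s)))"
    by (rule coeff_prod_lin1) simp
  also have "\<dots> = of_real (\<Sum>r<d. (\<Prod>j<d. \<rho> j) / \<rho> r)"
    unfolding of_real_sum
  proof (intro sum.cong refl)
    fix r assume r: "r \<in> {..<d}"
    have e: "(\<Prod>s\<in>{..<d}-{r}. \<rho> s) = (\<Prod>j<d. \<rho> j) / \<rho> r"
      using r assms by (subst prod_diff1) auto
    show "1 * (\<Prod>s\<in>{..<d}-{r}. complex_of_real (\<rho> s)) = complex_of_real ((\<Prod>j<d. \<rho> j) / \<rho> r)"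
      by (simp only: mult_1_left of_real_prod[symmetric] e)
  qed
  also have "(\<Sum>r<d. (\<Prod>j<d. \<rho> j) / \<rho> r) = (\<Prod>j<d. \<rho> j) * (\<Sum>j<d. 1 / \<rho> j)"
    by (simp add: sum_distrib_left)
  finally show "coeff Q 1 = of_real (c * (\<Prod>j<d. \<rho> j) * (\<Sum>j<d. 1 / \<rho> j))"
    unfolding Q_def by (simp add: mult.assoc)
qed

lemma base_amgm:
  assumes nonneg: "\<forall>r c. a r c \<ge> 0" and n: "n \<ge> 1"
    and rows: "\<forall>r<n. (\<Sum>j<n. a r j) = 1" and cols: "\<forall>j<n. (\<Sum>r<n. a r j) = 1"
    and y: "\<forall>j<n. y j > 0"
  shows "pp a n n y \<ge> (\<Prod>j<n. y j :: real)"
proof -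
  have L: "Lf a n r y \<ge> exp (\<Sum>j<n. a r j * ln (y j))" if r: "r < n" for r
  proof -
    have "ln (\<Sum>j<n. a r j *\<^sub>R y j) \<ge> (\<Sum>j<n. a r j * ln (y j))"
      by (rule concave_on_sum[OF _ _ ln_concave]) (use n rows r nonneg y in \<open>auto simp: lessThan_empty_iff\<close>)
    moreover have "(\<Sum>j<n. a r j *\<^sub>R y j) > 0"
    proof -
      have "Min (y ` {..<n}) = (\<Sum>j<n. a r j * (Min (y ` {..<n})))"
        using rows r by (simp add: sum_distrib_right[symmetric])
      also have "\<dots> \<le> (\<Sum>j<n. a r j *\<^sub>R y j)"
        using nonneg y by (intro sum_mono) (auto intro!: mult_left_mono)
      moreover have "Min (y ` {..<n}) > 0" using y n by (subst Min_gr_iff) (auto simp: lessThan_empty_iff)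
      ultimately show ?thesis by linarith
    qed
    ultimately have "exp (\<Sum>j<n. a r j * ln (y j)) \<le> (\<Sum>j<n. a r j *\<^sub>R y j)"
      by (metis exp_le_cancel_iff exp_ln)
    then show ?thesis unfolding Lf_def by simp
  qed
  have "(\<Prod>j<n. y j) = exp (\<Sum>j<n. ln (y j))" using y by (simp add: exp_sum)
  also have "(\<Sum>j<n. ln (y j)) = (\<Sum>r<n. \<Sum>j<n. a r j * ln (y j))"
    by (subst sum.swap) (simp add: sum_distrib_right[symmetric] cols)
  also have "exp \<dots> = (\<Prod>r<n. exp (\<Sum>j<n. a r j * ln (y j)))" by (simp add: exp_sum)
  also have "\<dots> \<le> (\<Prod>r<n. Lf a n r y)" by (intro prod_mono) (use L in auto)
  finally show ?thesis unfolding pp_n .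
qed

lemma pp_pos:
  assumes pos: "\<forall>r c. a r c > 0" and i: "1 \<le> i" "i \<le> n"
    and y0: "y 0 > 0" and y: "\<forall>j<i. y j \<ge> 0"
  shows "pp a n i y > (0::real)"
  unfolding pp_def
proof (rule sum_pos)
  show "finite (DL n (n - i))" by (rule finite_DL)
  show "DL n (n - i) \<noteq> {}" using DL_nonempty[of "n - i" n] by auto
  fix ts assume ts: "ts \<in> DL n (n - i)"
  have "wt a i ts > 0" using pos by (intro wt_pos[OF ts]) auto
  moreover have "(\<Prod>r\<in>{..<n} - set ts. Lf a i r y) > 0"
  proof (rule prod_pos)
    fix r
    have "a r 0 * y 0 \<le> (\<Sum>j<i. a r j * y j)"
    proof (rule member_le_sum)
      fix j assume "j \<in> {..<i} - {0}"
      then have "y j \<ge> 0" "a r j \<ge> 0" using y pos by (auto simp: less_imp_le)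
      then show "0 \<le> a r j * y j" by simp
    qed (use i in auto)
    then have "Lf a i r y \<ge> a r 0 * y 0" unfolding Lf_def by simp
    moreover have "a r 0 * y 0 > 0" using pos y0 by simp
    ultimately show "Lf a i r y > 0" by linarith
  qed
  ultimately show "of_real (wt a i ts) * (\<Prod>r\<in>{..<n} - set ts. Lf a i r y) > 0" by simp
qed

lemma pp1_zero:
  assumes "1 \<le> n" "z 0 = 0"
  shows "pp a n 1 z = 0"
  unfolding pp_def
proof (rule sum.neutral, rule ballI)
  fix ts assume ts: "ts \<in> DL n (n - 1)"
  have "card ({..<n} - set ts) = 1" using card_rest[OF ts] assms by simp
  then obtain r where "{..<n} - set ts = {r}" by (auto simp: card_1_singleton_iff)
  moreover have "Lf a 1 r z = 0" unfolding Lf_def using assms by simp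
  ultimately show "of_real (wt a 1 ts) * (\<Prod>r\<in>{..<n} - set ts. Lf a 1 r z) = 0" by simp
qed


lemma deg1_poly:
  fixes P :: "'a::comm_ring_1 poly"
  assumes "degree P \<le> 1"
  shows "poly P 1 = coeff P 0 + coeff P 1"
proof -
  have "P = [:coeff P 0, coeff P 1:]"
  proof (rule poly_eqI)
    fix m
    consider "m = 0" | "m = 1" | "m \<ge> (2::nat)" by linarith
    then show "coeff P m = coeff [:coeff P 0, coeff P 1:] m"
    proof cases
      case 3
      then have "coeff P m = 0" using assms by (intro coeff_eq_0) simp
      moreover obtain m' where "m = Suc (Suc m')" using 3 by (metis add_2_eq_Suc le_iff_add)
      ultimately show ?thesis by simp
    qed auto
  qed
  then have "poly P 1 = poly [:coeff P 0, coeff P 1:] 1" by simp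
  then show ?thesis by simp
qed

lemma chain:
  assumes pos: "\<forall>r c. a r c > 0" and n: "n \<ge> 1"
    and rows: "\<forall>r<n. (\<Sum>j<n. a r j) = 1" and cols: "\<forall>j<n. (\<Sum>r<n. a r j) = 1"
  shows "k \<le> n \<Longrightarrow> \<forall>y. (\<forall>j<n-k. y j > 0) \<longrightarrow> pp a n (n-k) y \<ge> exp (- real k) * (\<Prod>j<n-k. y j :: real)"
proof (induction k)
  case 0
  then show ?case using base_amgm[of a n] pos n rows cols by (auto simp: less_imp_le)
next
  case (Suc k)
  show ?case
  proof (intro allI impI)
    fix y :: "nat \<Rightarrow> real" assume y: "\<forall>j<n - Suc k. y j > 0"
    define i where "i = n - k"
    have i1: "1 \<le> i" and i2: "i \<le> n" and im: "n - Suc k = i - 1" using Suc.prems unfolding i_def by auto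
    have IH: "\<forall>y. (\<forall>j<i. y j > 0) \<longrightarrow> pp a n i y \<ge> exp (- real k) * (\<Prod>j<i. y j :: real)"
      using Suc.IH Suc.prems unfolding i_def by simp
    define x where "x = (\<lambda>j. complex_of_real (y j))"
    define Pc where "Pc = PP a n i x"
    have polyR: "poly Pc (of_real t) = of_real (pp a n i (y(i-1:=t)))" for t
    proof -
      have e: "x(i-1 := of_real t) = (\<lambda>j. complex_of_real ((y(i-1:=t)) j))" unfolding x_def by auto
      show ?thesis unfolding Pc_def poly_PP[OF i1] e by (rule pp_of_real)
    qed
    have c1: "coeff Pc 1 = of_real (pp a n (i-1) y)"
      unfolding Pc_def coeff_PP1[OF i1 i2] x_def by (rule pp_of_real)
    have prod_upd: "(\<Prod>j<i. (y(i-1:=t)) j) = (\<Prod>j<i-1. y j) * t" for t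
    proof -
      have "i = Suc (i-1)" using i1 by simp
      then have "(\<Prod>j<i. (y(i-1:=t)) j) = (\<Prod>j<i-1. (y(i-1:=t)) j) * t"
        by (metis fun_upd_same prod.lessThan_Suc)
      also have "(\<Prod>j<i-1. (y(i-1:=t)) j) = (\<Prod>j<i-1. y j)" by (intro prod.cong) auto
      finally show ?thesis .
    qed
    have IHt: "pp a n i (y(i-1:=t)) \<ge> exp (- real k) * (\<Prod>j<i-1. y j) * t" if t: "t > 0" for t
    proof -
      have "\<forall>j<i. (y(i-1:=t)) j > 0" using y t im by auto
      then have "pp a n i (y(i-1:=t)) \<ge> exp (- real k) * (\<Prod>j<i. (y(i-1:=t)) j)" using IH by blast
      then show ?thesis unfolding prod_upd by (simp add: mult.assoc)
    qed
    have top: "degree Pc \<le> i"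
      "coeff Pc i = of_real (\<Sum>ts\<in>DL n (n-i). wt a i ts * (\<Prod>r\<in>{..<n} - set ts. a r (i-1)))"
      using PP_top[OF i1 i2, of a x] unfolding Pc_def by auto
    show "pp a n (n - Suc k) y \<ge> exp (- real (Suc k)) * (\<Prod>j<n - Suc k. y j)"
    proof (cases "i = 1")
      case True
      have "coeff Pc 0 = poly Pc (of_real 0)" by (simp add: poly_0_coeff_0)
      also have "\<dots> = 0" unfolding polyR using pp1_zero[of n "y(i-1:=0)" a] n True by simp
      finally have c0: "coeff Pc 0 = 0" .
      have "poly Pc 1 = coeff Pc 1" using deg1_poly[of Pc] top(1) True c0 by simp
      then have "of_real (pp a n i (y(i-1:=1))) = (of_real (pp a n (i-1) y) :: complex)"
        using polyR[of 1] c1 by simp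
      then have eq: "pp a n (i-1) y = pp a n i (y(i-1:=1))" by simp
      have "exp (- real (Suc k)) \<le> exp (- real k)" by simp
      also have "exp (- real k) = exp (- real k) * (\<Prod>j<i-1. y j) * 1" using True by simp
      also have "\<dots> \<le> pp a n (i-1) y" unfolding eq by (rule IHt) simp
      finally show ?thesis using True im by simp
    next
      case False
      then have i2': "i \<ge> 2" using i1 by simp
      have c0: "coeff Pc 0 = of_real (pp a n i (y(i-1:=0)))"
        using polyR[of 0] by (simp add: poly_0_coeff_0)
      have "pp a n i (y(i-1:=0)) > 0"
      proof (rule pp_pos[OF pos i1 i2])
        show "(y(i-1:=0)) 0 > 0" using y im i2' by auto
        show "\<forall>j<i. (y(i-1:=0)) j \<ge> 0"
        proof (intro allI impI)
          fix j assume "j < i"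
          then have "j = i - 1 \<or> j < i - 1" by linarith
          then show "(y(i-1:=0)) j \<ge> 0" using y im by (auto simp: less_imp_le)
        qed
      qed
      then have c0nz: "coeff Pc 0 \<noteq> 0" unfolding c0 by simp
      have roots: "Im r = 0 \<and> Re r < 0" if r: "poly Pc r = 0" for r
      proof -
        have "Im r = 0 \<and> Re r \<le> 0"
          by (rule real_rooted[OF pos i1 i2]) (use y im r in \<open>auto simp: Pc_def x_def\<close>)
        moreover have "r \<noteq> 0" using r c0nz by (auto simp: poly_0_coeff_0)
        ultimately show ?thesis by (auto simp: complex_eq_iff)
      qed
      obtain \<rho> where \<rho>: "\<forall>j<degree Pc. \<rho> j > 0"
        "Pc = smult (lead_coeff Pc) (\<Prod>j<degree Pc. [:of_real (\<rho> j), 1:])"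
        using real_root_factor[of Pc] roots by blast
      define S where "S = (\<Sum>ts\<in>DL n (n-i). wt a i ts * (\<Prod>r\<in>{..<n} - set ts. a r (i-1)))"
      have Cn: "Cond n (i-1) a" using pos i2' unfolding Cond_def by (auto simp: less_imp_le intro!: exI[of _ 0])
      have Spos: "S > 0" using top_pos[OF Cn] i2 i1 unfolding S_def by simp
      have cPi: "coeff Pc i = of_real S" using top(2) unfolding S_def .
      then have "coeff Pc i \<noteq> 0" using Spos by simp
      then have "i \<le> degree Pc" by (rule le_degree)
      then have dP: "degree Pc = i" using top(1) by simp
      have lc: "lead_coeff Pc = of_real S" using cPi dP by simp
      have PcF: "Pc = smult (of_real S) (\<Prod>j<i. [:of_real (\<rho> j), 1:])" using \<rho>(2) dP lc by simp
      have \<rho>': "\<forall>j<i. \<rho> j > 0" using \<rho>(1) dP by simp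
      have "\<forall>t>0. S * (\<Prod>j<i. t + \<rho> j) \<ge> (exp (- real k) * (\<Prod>j<i-1. y j)) * t"
      proof (intro allI impI)
        fix t :: real assume t: "t > 0"
        have "of_real (S * (\<Prod>j<i. t + \<rho> j)) = poly Pc (of_real t)"
          using coeff_factored(1)[OF \<rho>', of S t] PcF by (simp only:)
        also have "\<dots> = of_real (pp a n i (y(i-1:=t)))" by (rule polyR)
        finally have "S * (\<Prod>j<i. t + \<rho> j) = pp a n i (y(i-1:=t))" by (simp only: of_real_eq_iff)
        then show "S * (\<Prod>j<i. t + \<rho> j) \<ge> (exp (- real k) * (\<Prod>j<i-1. y j)) * t" using IHt[OF t] by simp
      qed
      then have B: "S * (\<Prod>j<i. \<rho> j) * (\<Sum>j<i. 1 / \<rho> j) \<ge> (exp (- real k) * (\<Prod>j<i-1. y j)) / exp 1"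
        by (intro univariate_bound i1 Spos \<rho>')
      have "of_real (pp a n (i-1) y) = coeff Pc 1" using c1 by simp
      also have "\<dots> = of_real (S * (\<Prod>j<i. \<rho> j) * (\<Sum>j<i. 1 / \<rho> j))"
        using coeff_factored(2)[OF \<rho>', of S] PcF by simp
      finally have eq: "pp a n (i-1) y = S * (\<Prod>j<i. \<rho> j) * (\<Sum>j<i. 1 / \<rho> j)" by (simp only: of_real_eq_iff)
      have "exp (- real (Suc k)) = exp (- real k) / exp 1" by (simp add: exp_diff[symmetric])
      then show ?thesis using B eq im by simp
    qed
  qed
qed

lemma vdw_pos:
  assumes pos: "\<forall>r c. a r c > 0" and n: "n \<ge> 1"
    and rows: "\<forall>r<n. (\<Sum>j<n. a r j) = 1" and cols: "\<forall>j<n. (\<Sum>r<n. a r j) = 1"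
  shows "(\<Sum>ts\<in>DL n n. wt a 0 ts) \<ge> exp (- real n)"
proof -
  have "pp a n (n-n) (\<lambda>_. 1) \<ge> exp (- real n) * (\<Prod>j<n-n. 1 :: real)"
    using chain[OF assms, of n] by auto
  then show ?thesis using pp_0[of a n "\<lambda>_. 1::real"] by simp
qed


lemma vdw:
  assumes nonneg: "\<forall>r c. a r c \<ge> 0" and n: "n \<ge> 1"
    and rows: "\<forall>r<n. (\<Sum>j<n. a r j) = 1" and cols: "\<forall>j<n. (\<Sum>r<n. a r j) = 1"
  shows "(\<Sum>ts\<in>DL n n. wt a 0 ts) \<ge> exp (- real n)"
proof -
  define b where "b = (\<lambda>\<epsilon>::real. \<lambda>r c. (1 - \<epsilon>) * a r c + \<epsilon> / real n)"
  have ev: "exp (- real n) \<le> (\<Sum>ts\<in>DL n n. wt (b \<epsilon>) 0 ts)" if e: "0 < \<epsilon>" "\<epsilon> < 1" for \<epsilon>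
  proof (rule vdw_pos)
    show "\<forall>r c. b \<epsilon> r c > 0" unfolding b_def using e nonneg n
      by (auto intro!: add_nonneg_pos mult_nonneg_nonneg)
    show "\<forall>r<n. (\<Sum>j<n. b \<epsilon> r j) = 1" unfolding b_def using rows n
      by (simp add: sum.distrib sum_distrib_left[symmetric])
    show "\<forall>j<n. (\<Sum>r<n. b \<epsilon> r j) = 1" unfolding b_def using cols n
      by (simp add: sum.distrib sum_distrib_left[symmetric])
  qed (rule n)
  have lim: "((\<lambda>\<epsilon>. \<Sum>ts\<in>DL n n. wt (b \<epsilon>) 0 ts) \<longlongrightarrow> (\<Sum>ts\<in>DL n n. wt (b 0) 0 ts)) (at_right 0)"
    unfolding wt_def b_def using n by (intro tendsto_intros) auto
  have "eventually (\<lambda>\<epsilon>. exp (- real n) \<le> (\<Sum>ts\<in>DL n n. wt (b \<epsilon>) 0 ts)) (at_right (0::real))"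
    unfolding eventually_at_right_field by (intro exI[of _ 1]) (auto intro: ev)
  then have "exp (- real n) \<le> (\<Sum>ts\<in>DL n n. wt (b 0) 0 ts)"
    by (intro tendsto_lowerbound[OF lim]) auto
  moreover have "b 0 = a" unfolding b_def by auto
  ultimately show ?thesis by simp
qed


lemma DL_full_set: "ts \<in> DL n n \<Longrightarrow> set ts = {..<n}"
proof -
  assume that: "ts \<in> DL n n"
  have d: "distinct ts" "length ts = n" "set ts \<subseteq> {..<n}" using that unfolding DL_def by auto
  then have "card (set ts) = card {..<n}" by (simp add: distinct_card)
  then show ?thesis using d(3) by (intro card_subset_eq) auto
qed

lemma pm_count:
  fixes A B :: "nat set" and E :: "(nat \<times> nat) set"
  assumes reg: "bip_regular A B E k" and k: "k \<ge> 1" and cA: "card A = m" and cB: "card B = m" and m: "m \<ge> 1"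
  shows "real (card {M. perfect_matching A B E M}) \<ge> real k ^ m * exp (- real m)"
proof -
  have fA: "finite A" and fB: "finite B" and EAB: "E \<subseteq> A \<times> B"
    and dA: "\<forall>x\<in>A. bip_deg_A E x = k" and dB: "\<forall>y\<in>B. bip_deg_B E y = k"
    using reg unfolding bip_regular_def bip_graph_def by auto
  obtain \<alpha> where \<alpha>: "bij_betw \<alpha> {..<m} A" using ex_bij_betw_nat_finite[OF fA] cA atLeast0LessThan by auto
  obtain \<beta> where \<beta>: "bij_betw \<beta> {..<m} B" using ex_bij_betw_nat_finite[OF fB] cB atLeast0LessThan by auto
  have \<alpha>i: "inj_on \<alpha> {..<m}" and \<alpha>s: "\<alpha> ` {..<m} = A" using \<alpha> by (auto simp: bij_betw_def)
  have \<beta>i: "inj_on \<beta> {..<m}" and \<beta>s: "\<beta> ` {..<m} = B" using \<beta> by (auto simp: bij_betw_def)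
  define a where "a = (\<lambda>r c. if r < m \<and> c < m \<and> (\<alpha> r, \<beta> c) \<in> E then 1 / real k else 0)"
  have rows: "\<forall>r<m. (\<Sum>j<m. a r j) = 1"
  proof (intro allI impI)
    fix r assume r: "r < m"
    have "(\<Sum>j<m. a r j) = (\<Sum>j<m. if (\<alpha> r, \<beta> j) \<in> E then 1 / real k else 0)"
      unfolding a_def using r by (intro sum.cong) auto
    also have "\<dots> = (\<Sum>j\<in>{j\<in>{..<m}. (\<alpha> r, \<beta> j) \<in> E}. 1 / real k)" by (rule sum.inter_filter[symmetric]) simp
    also have "\<dots> = real (card {j\<in>{..<m}. (\<alpha> r, \<beta> j) \<in> E}) / real k" by simp
    also have "card {j\<in>{..<m}. (\<alpha> r, \<beta> j) \<in> E} = card {y. (\<alpha> r, y) \<in> E}"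
    proof -
      have "\<beta> ` {j\<in>{..<m}. (\<alpha> r, \<beta> j) \<in> E} = {y. (\<alpha> r, y) \<in> E}"
        using EAB \<beta>s by auto
      moreover have "inj_on \<beta> {j\<in>{..<m}. (\<alpha> r, \<beta> j) \<in> E}" using \<beta>i by (rule inj_on_subset) auto
      then have "card (\<beta> ` {j\<in>{..<m}. (\<alpha> r, \<beta> j) \<in> E}) = card {j\<in>{..<m}. (\<alpha> r, \<beta> j) \<in> E}" by (rule card_image)
      ultimately show ?thesis by simp
    qed
    also have "\<dots> = k" using dA \<alpha>s r unfolding bip_deg_A_def by auto
    finally show "(\<Sum>j<m. a r j) = 1" using k by simp
  qed
  have cols: "\<forall>j<m. (\<Sum>r<m. a r j) = 1"
  proof (intro allI impI)
    fix j assume j: "j < m"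
    have "(\<Sum>r<m. a r j) = (\<Sum>r<m. if (\<alpha> r, \<beta> j) \<in> E then 1 / real k else 0)"
      unfolding a_def using j by (intro sum.cong) auto
    also have "\<dots> = (\<Sum>r\<in>{r\<in>{..<m}. (\<alpha> r, \<beta> j) \<in> E}. 1 / real k)" by (rule sum.inter_filter[symmetric]) simp
    also have "\<dots> = real (card {r\<in>{..<m}. (\<alpha> r, \<beta> j) \<in> E}) / real k" by simp
    also have "card {r\<in>{..<m}. (\<alpha> r, \<beta> j) \<in> E} = card {x. (x, \<beta> j) \<in> E}"
    proof -
      have "\<alpha> ` {r\<in>{..<m}. (\<alpha> r, \<beta> j) \<in> E} = {x. (x, \<beta> j) \<in> E}"
        using EAB \<alpha>s by auto
      moreover have "inj_on \<alpha> {r\<in>{..<m}. (\<alpha> r, \<beta> j) \<in> E}" using \<alpha>i by (rule inj_on_subset) auto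
      then have "card (\<alpha> ` {r\<in>{..<m}. (\<alpha> r, \<beta> j) \<in> E}) = card {r\<in>{..<m}. (\<alpha> r, \<beta> j) \<in> E}" by (rule card_image)
      ultimately show ?thesis by simp
    qed
    also have "\<dots> = k" using dB \<beta>s j unfolding bip_deg_B_def by auto
    finally show "(\<Sum>r<m. a r j) = 1" using k by simp
  qed
  have nonneg: "\<forall>r c. a r c \<ge> 0" unfolding a_def by simp
  have V: "(\<Sum>ts\<in>DL m m. wt a 0 ts) \<ge> exp (- real m)" by (rule vdw[OF nonneg m rows cols])
  define G where "G = {ts\<in>DL m m. \<forall>c<m. (\<alpha> (ts!c), \<beta> c) \<in> E}"
  have wt_eq: "wt a 0 ts = (if ts \<in> G then (1 / real k) ^ m else 0)" if ts: "ts \<in> DL m m" for ts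
  proof -
    have len: "length ts = m" and lt: "\<forall>c<m. ts ! c < m" using ts unfolding DL_def by (auto dest: nth_mem)
    have "wt a 0 ts = (\<Prod>c<m. if (\<alpha> (ts!c), \<beta> c) \<in> E then 1 / real k else 0)"
      unfolding wt_def len a_def using lt by (intro prod.cong) auto
    also have "\<dots> = (if ts \<in> G then (1 / real k) ^ m else 0)"
      unfolding G_def using ts by (auto simp: prod_constant)
    finally show ?thesis .
  qed
  have GG: "{ts\<in>DL m m. ts \<in> G} = G" unfolding G_def by auto
  have "(\<Sum>ts\<in>DL m m. wt a 0 ts) = (\<Sum>ts\<in>DL m m. if ts \<in> G then (1 / real k) ^ m else 0)"
    by (rule sum.cong[OF refl]) (rule wt_eq)
  also have "\<dots> = (\<Sum>ts\<in>{ts\<in>DL m m. ts \<in> G}. (1 / real k) ^ m)"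
    by (rule sum.inter_filter[symmetric, OF finite_DL])
  also have "\<dots> = (\<Sum>ts\<in>G. (1 / real k) ^ m)" unfolding GG ..
  also have "\<dots> = real (card G) / real k ^ m" by (simp add: power_one_over)
  finally have "real k ^ m * (\<Sum>ts\<in>DL m m. wt a 0 ts) = real (card G)" using k by (simp add: field_simps)
  moreover have "real k ^ m * exp (- real m) \<le> real k ^ m * (\<Sum>ts\<in>DL m m. wt a 0 ts)"
    using V by (intro mult_left_mono) auto
  ultimately have cG: "real (card G) \<ge> real k ^ m * exp (- real m)" by simp
  define Mf where "Mf = (\<lambda>ts. (\<lambda>c. (\<alpha> (ts!c), \<beta> c)) ` {..<m})"
  have PM: "perfect_matching A B E (Mf ts)" if ts: "ts \<in> G" for ts
  proof -
    have tsD: "ts \<in> DL m m" and edges: "\<forall>c<m. (\<alpha> (ts!c), \<beta> c) \<in> E" using ts unfolding G_def by auto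
    have st: "set ts = {..<m}" by (rule DL_full_set[OF tsD])
    have len: "length ts = m" and dist: "distinct ts" using tsD unfolding DL_def by auto
    have lt: "ts ! c < m" if "c < m" for c using st len that by (metis lessThan_iff nth_mem)
    show ?thesis unfolding perfect_matching_def
    proof (intro conjI ballI)
      show "Mf ts \<subseteq> E" unfolding Mf_def using edges by auto
    next
      fix x assume x: "x \<in> A"
      then obtain r where r: "r < m" "x = \<alpha> r" using \<alpha>s by auto
      then obtain c where c: "c < m" "ts ! c = r" using st len by (metis in_set_conv_nth lessThan_iff)
      show "\<exists>!y. (x, y) \<in> Mf ts"
      proof (rule ex1I[of _ "\<beta> c"])
        show "(x, \<beta> c) \<in> Mf ts" unfolding Mf_def using c r by auto
        fix y assume "(x, y) \<in> Mf ts"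
        then obtain c' where c': "c' < m" "x = \<alpha> (ts!c')" "y = \<beta> c'" unfolding Mf_def by auto
        have "\<alpha> (ts ! c') = \<alpha> (ts ! c)" using c' c r by simp
        then have "ts ! c' = ts ! c" by (rule inj_onD[OF \<alpha>i]) (use lt c c' in auto)
        then have "c' = c" using nth_eq_iff_index_eq[OF dist, of c' c] len c c' by simp
        then show "y = \<beta> c" using c' by simp
      qed
    next
      fix y assume y: "y \<in> B"
      then obtain c where c: "c < m" "y = \<beta> c" using \<beta>s by auto
      show "\<exists>!x. (x, y) \<in> Mf ts"
      proof (rule ex1I[of _ "\<alpha> (ts!c)"])
        show "(\<alpha> (ts!c), y) \<in> Mf ts" unfolding Mf_def using c by auto
        fix x assume "(x, y) \<in> Mf ts"
        then obtain c' where c': "c' < m" "x = \<alpha> (ts!c')" "y = \<beta> c'" unfolding Mf_def by auto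
        have "\<beta> c' = \<beta> c" using c c' by simp
        then have "c' = c" by (rule inj_onD[OF \<beta>i]) (use c c' in auto)
        then show "x = \<alpha> (ts!c)" using c' by simp
      qed
    qed
  qed
  have inj: "inj_on Mf G"
  proof (rule inj_onI)
    fix ts ts' assume ts: "ts \<in> G" and ts': "ts' \<in> G" and eq: "Mf ts = Mf ts'"
    have len: "length ts = m" "length ts' = m" using ts ts' unfolding G_def DL_def by auto
    have ss: "set ts \<subseteq> {..<m}" "set ts' \<subseteq> {..<m}" using ts ts' unfolding G_def DL_def by auto
    have lt: "ts ! c < m" "ts' ! c < m" if "c < m" for c
    proof -
      have "ts ! c \<in> set ts" "ts' ! c \<in> set ts'" using len that by auto
      then show "ts ! c < m" "ts' ! c < m" using ss by auto
    qed
    show "ts = ts'"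
    proof (rule nth_equalityI)
      show "length ts = length ts'" using len by simp
      fix c assume "c < length ts"
      then have c: "c < m" using len by simp
      have "(\<alpha> (ts!c), \<beta> c) \<in> Mf ts'" using eq c unfolding Mf_def by auto
      then obtain c' where c': "c' < m" "\<alpha> (ts!c) = \<alpha> (ts'!c')" "\<beta> c = \<beta> c'" unfolding Mf_def by auto
      have "\<beta> c' = \<beta> c" using c' by simp
      then have "c' = c" by (rule inj_onD[OF \<beta>i]) (use c c' in auto)
      then have "\<alpha> (ts ! c) = \<alpha> (ts' ! c)" using c' by simp
      then show "ts ! c = ts' ! c" by (rule inj_onD[OF \<alpha>i]) (use lt c in auto)
    qed
  qed
  have fin: "finite {M. perfect_matching A B E M}"
  proof (rule finite_subset)
    show "{M. perfect_matching A B E M} \<subseteq> Pow E" unfolding perfect_matching_def by auto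
    show "finite (Pow E)" using EAB fA fB by (meson finite_Pow_iff finite_SigmaI finite_subset)
  qed
  have "card G = card (Mf ` G)" using inj by (simp add: card_image)
  also have "\<dots> \<le> card {M. perfect_matching A B E M}" using PM fin by (intro card_mono) auto
  finally show ?thesis using cG by (meson of_nat_le_iff order.trans)
qed


fun seqs :: "nat set \<Rightarrow> nat set \<Rightarrow> nat \<Rightarrow> (nat \<times> nat) set \<Rightarrow> (nat \<times> nat) set list set" where
  "seqs A B 0 E = (if E = {} then {[]} else {})"
| "seqs A B (Suc k) E = (\<Union>M\<in>{M. perfect_matching A B E M}. (\<lambda>L. M # L) ` seqs A B k (E - M))"

lemma card_minus_one:
  assumes "finite S" "y \<in> S" "card S = Suc k"
  shows "card (S - {y}) = k"
  using assms by simp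

lemma regular_minus_pm:
  assumes reg: "bip_regular A B E (Suc k)" and M: "perfect_matching A B E M"
  shows "bip_regular A B (E - M) k"
proof -
  have fA: "finite A" and fB: "finite B" and EAB: "E \<subseteq> A \<times> B"
    and dA: "\<forall>x\<in>A. bip_deg_A E x = Suc k" and dB: "\<forall>y\<in>B. bip_deg_B E y = Suc k"
    using reg unfolding bip_regular_def bip_graph_def by auto
  have ME: "M \<subseteq> E" and MA: "\<forall>x\<in>A. \<exists>!y. (x, y) \<in> M" and MB: "\<forall>y\<in>B. \<exists>!x. (x, y) \<in> M"
    using M unfolding perfect_matching_def by auto
  have "bip_deg_A (E - M) x = k" if x: "x \<in> A" for x
  proof -
    obtain y where y: "(x, y) \<in> M" and yu: "\<And>y'. (x, y') \<in> M \<Longrightarrow> y' = y" using MA x by blast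
    have "{b. (x, b) \<in> E - M} = {b. (x, b) \<in> E} - {y}" using y yu by blast
    moreover have "finite {b. (x, b) \<in> E}" by (rule finite_subset[OF _ fB]) (use EAB in blast)
    moreover have "y \<in> {b. (x, b) \<in> E}" using y ME by auto
    ultimately show ?thesis using dA x unfolding bip_deg_A_def by simp
  qed
  moreover have "bip_deg_B (E - M) y = k" if y: "y \<in> B" for y
  proof -
    obtain x where x: "(x, y) \<in> M" and xu: "\<And>x'. (x', y) \<in> M \<Longrightarrow> x' = x" using MB y by blast
    have "{a. (a, y) \<in> E - M} = {a. (a, y) \<in> E} - {x}" using x xu by blast
    moreover have "finite {a. (a, y) \<in> E}" by (rule finite_subset[OF _ fA]) (use EAB in blast)
    moreover have "x \<in> {a. (a, y) \<in> E}" using x ME by auto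
    ultimately show ?thesis using dB y unfolding bip_deg_B_def by simp
  qed
  moreover have "E - M \<subseteq> A \<times> B" using EAB by auto
  ultimately show ?thesis using fA fB unfolding bip_regular_def bip_graph_def by blast
qed

lemma regular_zero:
  assumes "bip_regular A B E 0"
  shows "E = {}"
proof (rule ccontr)
  assume "E \<noteq> {}"
  then obtain x y where xy: "(x, y) \<in> E" by auto
  have fB: "finite B" and EAB: "E \<subseteq> A \<times> B" and dA: "\<forall>x\<in>A. bip_deg_A E x = 0"
    using assms unfolding bip_regular_def bip_graph_def by auto
  have "finite {b. (x, b) \<in> E}" by (rule finite_subset[OF _ fB]) (use EAB in blast)
  moreover have "x \<in> A" using xy EAB by auto
  moreover have "card {b. (x, b) \<in> E} = 0" using dA \<open>x \<in> A\<close> unfolding bip_deg_A_def by simp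
  ultimately have "{b. (x, b) \<in> E} = {}" by simp
  then show False using xy by auto
qed

lemma pm_finite:
  assumes "finite E"
  shows "finite {M. perfect_matching A B E M}"
  by (rule finite_subset[of _ "Pow E"]) (auto simp: perfect_matching_def assms)

lemma seqs_finite: "finite E \<Longrightarrow> finite (seqs A B k E)"
proof (induction k arbitrary: E)
  case 0
  then show ?case by simp
next
  case (Suc k)
  then show ?case by (simp add: pm_finite)
qed

lemma seqs_props:
  assumes "L \<in> seqs A B k E" "A \<noteq> {}"
  shows "length L = k \<and> (\<forall>M\<in>set L. M \<noteq> {} \<and> perfect_matching A B E M) \<and> \<Union>(set L) = E \<and>
         (\<forall>M\<in>set L. \<forall>M'\<in>set L. M \<noteq> M' \<longrightarrow> M \<inter> M' = {})"
  using assms(1)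
proof (induction k arbitrary: E L)
  case 0
  then show ?case by (simp split: if_splits)
next
  case (Suc k)
  then obtain M L' where M: "perfect_matching A B E M" and L: "L = M # L'" and L': "L' \<in> seqs A B k (E - M)"
    by auto
  have IH: "length L' = k \<and> (\<forall>N\<in>set L'. N \<noteq> {} \<and> perfect_matching A B (E - M) N) \<and> \<Union>(set L') = E - M \<and>
         (\<forall>N\<in>set L'. \<forall>N'\<in>set L'. N \<noteq> N' \<longrightarrow> N \<inter> N' = {})"
    using Suc.IH[OF L'] .
  have ME: "M \<subseteq> E" using M unfolding perfect_matching_def by auto
  have Mne: "M \<noteq> {}"
  proof -
    obtain x where "x \<in> A" using assms(2) by auto
    then obtain y where "(x, y) \<in> M" using M unfolding perfect_matching_def by blast
    then show ?thesis by auto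
  qed
  have pms: "perfect_matching A B E N" if "N \<in> set L'" for N
  proof -
    have "perfect_matching A B (E - M) N" using IH that by blast
    then show ?thesis unfolding perfect_matching_def by blast
  qed
  have sub: "N \<subseteq> E - M" if "N \<in> set L'" for N
    using IH that by blast
  have "\<Union>(set L) = E" using IH ME L by auto
  moreover have "\<forall>N\<in>set L. \<forall>N'\<in>set L. N \<noteq> N' \<longrightarrow> N \<inter> N' = {}"
    unfolding L using IH sub by fastforce
  moreover have "\<forall>N\<in>set L. N \<noteq> {} \<and> perfect_matching A B E N"
    unfolding L using IH pms Mne M by auto
  ultimately show ?case using IH L by simp
qed


lemma seqs_card:
  assumes "bip_regular A B E k" "card A = m" "card B = m" "m \<ge> 1"
  shows "real (card (seqs A B k E)) \<ge> fact k ^ m * exp (- real (k * m))"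
  using assms(1)
proof (induction k arbitrary: E)
  case 0
  then have "E = {}" by (rule regular_zero)
  then show ?case by simp
next
  case (Suc k)
  have fE: "finite E" using Suc.prems unfolding bip_regular_def bip_graph_def
    by (meson finite_SigmaI finite_subset)
  define P where "P = {M. perfect_matching A B E M}"
  have fP: "finite P" unfolding P_def by (rule pm_finite[OF fE])
  define X :: real where "X = fact k ^ m * exp (- real (k * m))"
  have "card (seqs A B (Suc k) E) = (\<Sum>M\<in>P. card ((\<lambda>L. M # L) ` seqs A B k (E - M)))"
    unfolding seqs.simps P_def[symmetric]
  proof (rule card_UN_disjoint[OF fP])
    show "\<forall>M\<in>P. finite ((#) M ` seqs A B k (E - M))" using fE by (auto intro: seqs_finite)
    show "\<forall>M\<in>P. \<forall>M'\<in>P. M \<noteq> M' \<longrightarrow> (#) M ` seqs A B k (E - M) \<inter> (#) M' ` seqs A B k (E - M') = {}"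
      by auto
  qed
  also have "\<dots> = (\<Sum>M\<in>P. card (seqs A B k (E - M)))"
    by (intro sum.cong refl card_image) (auto simp: inj_on_def)
  finally have c: "real (card (seqs A B (Suc k) E)) = (\<Sum>M\<in>P. real (card (seqs A B k (E - M))))"
    by simp
  have s1: "(\<Sum>M\<in>P. X) \<le> (\<Sum>M\<in>P. real (card (seqs A B k (E - M))))"
  proof (rule sum_mono)
    fix M assume "M \<in> P"
    then have "bip_regular A B (E - M) k" using regular_minus_pm[OF Suc.prems] unfolding P_def by simp
    then show "X \<le> real (card (seqs A B k (E - M)))" unfolding X_def by (rule Suc.IH)
  qed
  have s2: "(\<Sum>M\<in>P. X) = real (card P) * X" by simp
  have s3: "real (card P) \<ge> real (Suc k) ^ m * exp (- real m)"
    unfolding P_def by (rule pm_count[OF Suc.prems _ assms(2,3,4)]) simp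
  have s4: "X \<ge> 0" unfolding X_def by simp
  have "real (Suc k) ^ m * exp (- real m) * X \<le> real (card P) * X" using s3 s4 by (rule mult_right_mono)
  then have "real (Suc k) ^ m * exp (- real m) * X \<le> (\<Sum>M\<in>P. real (card (seqs A B k (E - M))))"
    using s1 s2 by linarith
  then have "real (card (seqs A B (Suc k) E)) \<ge> real (Suc k) ^ m * exp (- real m) * X"
    unfolding c .
  moreover have "real (Suc k) ^ m * exp (- real m) * X = fact (Suc k) ^ m * exp (- real (Suc k * m))"
  proof -
    have e1: "(fact (Suc k) :: real) ^ m = real (Suc k) ^ m * fact k ^ m"
      by (simp only: fact_Suc power_mult_distrib)
    have e2: "exp (- real (Suc k * m)) = exp (- real m) * exp (- real (k*m))"
      by (simp add: exp_add[symmetric] algebra_simps)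
    show ?thesis unfolding X_def e1 e2 by (simp only: mult_ac)
  qed
  ultimately show ?case by simp
qed

lemma factorizations_bound:
  fixes A B :: "nat set" and E :: "(nat \<times> nat) set"
  assumes reg: "bip_regular A B E k" and k: "k \<ge> 1" and cA: "card A = m" and cB: "card B = m" and m: "m \<ge> 1"
  shows "real (card (one_factorizations A B E)) * real k ^ k \<ge> fact k ^ m * exp (- real (k * m))"
proof -
  have fE: "finite E" using reg unfolding bip_regular_def bip_graph_def
    by (meson finite_SigmaI finite_subset)
  have Ane: "A \<noteq> {}" using cA m by auto
  define S where "S = seqs A B k E"
  have fS: "finite S" unfolding S_def by (rule seqs_finite[OF fE])
  have inOF: "set L \<in> one_factorizations A B E" and lenL: "length L = k" if "L \<in> S" for L
    using seqs_props[OF that[unfolded S_def] Ane] unfolding one_factorizations_def by auto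
  have fOF: "finite (one_factorizations A B E)"
  proof (rule finite_subset)
    show "one_factorizations A B E \<subseteq> Pow (Pow E)"
      unfolding one_factorizations_def perfect_matching_def by auto
    show "finite (Pow (Pow E))" using fE by simp
  qed
  have SU: "S = (\<Union>F\<in>set ` S. {L\<in>S. set L = F})" by auto
  have "card (\<Union>F\<in>set ` S. {L\<in>S. set L = F}) \<le> (\<Sum>F\<in>set ` S. card {L\<in>S. set L = F})"
    by (rule card_UN_le) (use fS in simp)
  then have "card S \<le> (\<Sum>F\<in>set ` S. card {L\<in>S. set L = F})" using SU by simp
  also have "\<dots> \<le> (\<Sum>F\<in>set ` S. k ^ k)"
  proof (rule sum_mono)
    fix F assume "F \<in> set ` S"
    then obtain L0 where L0: "L0 \<in> S" "F = set L0" by auto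
    have cF: "card F \<le> k" using L0 lenL[OF L0(1)] card_length by metis
    have "{L\<in>S. set L = F} \<subseteq> {xs. set xs \<subseteq> F \<and> length xs = k}" using lenL by auto
    then have "card {L\<in>S. set L = F} \<le> card {xs. set xs \<subseteq> F \<and> length xs = k}"
      by (intro card_mono) (auto simp: finite_lists_length_eq L0)
    also have "\<dots> = card F ^ k" by (rule card_lists_length_eq) (simp add: L0)
    also have "\<dots> \<le> k ^ k" using cF by (rule power_mono) simp
    finally show "card {L\<in>S. set L = F} \<le> k ^ k" .
  qed
  also have "\<dots> = card (set ` S) * k ^ k" by simp
  also have "\<dots> \<le> card (one_factorizations A B E) * k ^ k"
    using inOF fOF by (intro mult_right_mono card_mono) auto
  finally have "real (card S) \<le> real (card (one_factorizations A B E)) * real k ^ k"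
    by (metis of_nat_le_iff of_nat_mult of_nat_power)
  moreover have "real (card S) \<ge> fact k ^ m * exp (- real (k * m))"
    unfolding S_def by (rule seqs_card[OF reg cA cB m])
  ultimately show ?thesis by linarith
qed


lemma exp_partial:
  fixes x :: real
  assumes "x \<ge> 0"
  shows "(\<Sum>n<N. x ^ n / fact n) \<le> exp x"
proof -
  have "(\<Sum>n<N. x ^ n /\<^sub>R fact n) \<le> (\<Sum>n. x ^ n /\<^sub>R fact n)"
    by (rule sum_le_suminf[OF summable_exp_generic]) (use assms in auto)
  then show ?thesis unfolding exp_def by (simp add: divide_inverse mult.commute)
qed

lemma fact_exp:
  assumes k: "k \<ge> 1"
  shows "2 * real k ^ k \<le> fact k * exp (real k)"
proof -
  obtain j where j: "k = Suc j" using k by (cases k) auto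
  have "real k ^ j / fact j + real k ^ k / fact k = (\<Sum>n\<in>{j, k}. real k ^ n / fact n)"
    using j by simp
  also have "\<dots> \<le> (\<Sum>n<Suc k. real k ^ n / fact n)"
    by (rule sum_mono2) (use j in auto)
  also have "\<dots> \<le> exp (real k)" by (rule exp_partial) simp
  finally have A: "real k ^ j / fact j + real k ^ k / fact k \<le> exp (real k)" .
  have f1: "(fact k :: real) = real k * fact j" using j by (simp only: fact_Suc)
  have f2: "real k ^ k = real k * real k ^ j" using j by simp
  have kpos: "real k > 0" using k by simp
  have "real k ^ k / fact k = real k ^ j / fact j" unfolding f1 f2 using kpos by simp
  then have "real k ^ j / fact j = real k ^ k / fact k" by simp
  then have "2 * (real k ^ k / fact k) \<le> exp (real k)" using A by simp
  then show ?thesis by (simp add: field_simps)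
qed

lemma final_bound:
  fixes r1 r2 m c :: nat and \<alpha> :: real
  assumes r1: "r1 \<ge> 18" and \<alpha>: "0 < \<alpha>" "\<alpha> \<le> 1/10"
    and r2: "real r2 \<le> \<alpha> ^ 5 * real r1 / ln (real r1)"
    and m: "m \<ge> (2*r1)^(2*r1)"
    and bound: "real c * real (r1+r2) ^ (r1+r2) \<ge> fact (r1+r2) ^ m * exp (- real ((r1+r2) * m))"
  shows "real c \<ge> ((real r1 - real r2) / exp 2) ^ ((r1 - r2) * m)"
proof -
  have e2: "exp (2::real) \<le> 9"
  proof -
    have "exp (2::real) = exp 1 ^ 2" by (simp add: exp_of_nat_mult[symmetric])
    also have "\<dots> \<le> 3 ^ 2" by (rule power_mono[OF exp_le]) simp
    finally show ?thesis by simp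
  qed
  have lnr: "ln (real r1) \<ge> 2"
  proof -
    have "exp 2 \<le> real r1" using e2 r1 by simp
    then have "ln (exp 2) \<le> ln (real r1)" by (subst ln_le_cancel_iff) (use r1 in auto)
    then show ?thesis by simp
  qed
  have a5: "\<alpha> ^ 5 \<le> 1" using \<alpha> by (intro power_le_one) auto
  have "\<alpha> ^ 5 * real r1 / ln (real r1) \<le> 1 * real r1 / 2"
    using a5 lnr \<alpha> by (intro frac_le mult_right_mono) auto
  then have r2h: "real r2 \<le> real r1 / 2" using r2 by linarith
  then have r2le: "r2 \<le> r1" by simp
  define K where "K = r1 - r2"
  define k where "k = r1 + r2"
  have K: "real K = real r1 - real r2" unfolding K_def using r2le by simp
  have K9: "real K \<ge> 9" using K r2h r1 by simp
  have kK: "K \<le> k" unfolding K_def k_def by simp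
  have k1: "k \<ge> 1" unfolding k_def using r1 by simp
  have k2: "k \<le> 2 * r1" unfolding k_def using r2le by simp
  define b where "b = real K / exp 2"
  have b1: "b \<ge> 1" unfolding b_def using K9 e2 by simp
  have "2 * real k ^ k \<le> fact k * exp (real k)" by (rule fact_exp[OF k1])
  then have "2 * (real k ^ k * exp (- 2 * real k)) \<le> fact k * exp (- real k)"
  proof -
    assume h: "2 * real k ^ k \<le> fact k * exp (real k)"
    have "2 * (real k ^ k * exp (- 2 * real k)) = (2 * real k ^ k) * exp (- 2 * real k)" by simp
    also have "\<dots> \<le> (fact k * exp (real k)) * exp (- 2 * real k)" using h by (intro mult_right_mono) auto
    also have "\<dots> = fact k * exp (- real k)" by (simp add: mult.assoc exp_add[symmetric])
    finally show ?thesis .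
  qed
  moreover have "real k ^ k * exp (- 2 * real k) = (real k / exp 2) ^ k"
    by (simp add: power_divide exp_of_nat_mult[symmetric] exp_minus field_simps)
  ultimately have F: "2 * (real k / exp 2) ^ k \<le> fact k * exp (- real k)" by simp
  have "(2 * (real k / exp 2) ^ k) ^ m \<le> (fact k * exp (- real k)) ^ m"
    by (rule power_mono[OF F]) simp
  moreover have "(fact k * exp (- real k)) ^ m = fact k ^ m * exp (- real (k * m))"
    by (simp add: power_mult_distrib exp_of_nat_mult[symmetric] mult.commute)
  moreover have "(2 * (real k / exp 2) ^ k) ^ m = 2 ^ m * (real k / exp 2) ^ (k * m)"
    by (simp add: power_mult_distrib power_mult)
  ultimately have G: "2 ^ m * (real k / exp 2) ^ (k * m) \<le> fact k ^ m * exp (- real (k * m))" by simp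
  have "b ^ (K * m) \<le> b ^ (k * m)" using b1 kK by (intro power_increasing) auto
  also have "\<dots> \<le> (real k / exp 2) ^ (k * m)"
    using b1 kK unfolding b_def by (intro power_mono divide_right_mono) auto
  finally have H: "b ^ (K * m) \<le> (real k / exp 2) ^ (k * m)" .
  have "real k ^ k \<le> real (2 * r1) ^ (2 * r1)"
  proof -
    have "real k ^ k \<le> real (2 * r1) ^ k" using k2 by (intro power_mono) auto
    also have "\<dots> \<le> real (2 * r1) ^ (2 * r1)" using k2 r1 by (intro power_increasing) auto
    finally show ?thesis .
  qed
  also have "\<dots> \<le> real m" using m by (metis of_nat_le_iff of_nat_power)
  also have "\<dots> \<le> 2 ^ m" using less_exp[of m] by (metis of_nat_le_iff of_nat_numeral of_nat_power less_imp_le)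
  finally have kk: "real k ^ k \<le> 2 ^ m" .
  have "real k ^ k * b ^ (K * m) \<le> 2 ^ m * (real k / exp 2) ^ (k * m)"
    using kk H b1 by (intro mult_mono) auto
  also have "\<dots> \<le> real c * real k ^ k" using G bound unfolding k_def by simp
  finally have "real k ^ k * b ^ (K * m) \<le> real k ^ k * real c" by (simp add: mult.commute)
  moreover have "real k ^ k > 0" using k1 by simp
  ultimately have "b ^ (K * m) \<le> real c" by simp
  then show ?thesis unfolding b_def using K K_def by simp
qed


theorem mainTheorem7:
  shows "\<forall>\<alpha>::real. 0 < \<alpha> \<and> \<alpha> \<le> 1/10 \<longrightarrow>
    (\<exists>r0::nat. \<forall>r1::nat. r1 \<ge> r0 \<longrightarrow>
      (\<exists>m0::nat. \<forall>m::nat. m \<ge> m0 \<longrightarrow>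
        (\<forall>(A::nat set) (B::nat set) (H::(nat \<times> nat) set) (R::(nat \<times> nat) set) (r2::nat).
           good \<alpha> r1 m A B H \<longrightarrow>
           real r2 \<le> \<alpha> ^ 5 * real r1 / ln (real r1) \<longrightarrow>
           H \<subseteq> R \<longrightarrow> bip_regular A B R (r1 + r2) \<longrightarrow>
           real (card (one_factorizations A B R))
             \<ge> ((real r1 - real r2) / exp 2) ^ ((r1 - r2) * m))))"
proof (intro allI impI)
  fix \<alpha> :: real assume \<alpha>: "0 < \<alpha> \<and> \<alpha> \<le> 1/10"
  show "\<exists>r0::nat. \<forall>r1::nat. r1 \<ge> r0 \<longrightarrow>
      (\<exists>m0::nat. \<forall>m::nat. m \<ge> m0 \<longrightarrow>
        (\<forall>(A::nat set) (B::nat set) (H::(nat \<times> nat) set) (R::(nat \<times> nat) set) (r2::nat).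
           good \<alpha> r1 m A B H \<longrightarrow>
           real r2 \<le> \<alpha> ^ 5 * real r1 / ln (real r1) \<longrightarrow>
           H \<subseteq> R \<longrightarrow> bip_regular A B R (r1 + r2) \<longrightarrow>
           real (card (one_factorizations A B R))
             \<ge> ((real r1 - real r2) / exp 2) ^ ((r1 - r2) * m)))"
  proof (rule exI[of _ 18], intro allI impI)
    fix r1 :: nat assume r1: "18 \<le> r1"
    show "\<exists>m0::nat. \<forall>m::nat. m \<ge> m0 \<longrightarrow>
        (\<forall>(A::nat set) (B::nat set) (H::(nat \<times> nat) set) (R::(nat \<times> nat) set) (r2::nat).
           good \<alpha> r1 m A B H \<longrightarrow>
           real r2 \<le> \<alpha> ^ 5 * real r1 / ln (real r1) \<longrightarrow>
           H \<subseteq> R \<longrightarrow> bip_regular A B R (r1 + r2) \<longrightarrow>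
           real (card (one_factorizations A B R))
             \<ge> ((real r1 - real r2) / exp 2) ^ ((r1 - r2) * m))"
    proof (rule exI[of _ "(2*r1)^(2*r1)"], intro allI impI)
      fix m :: nat and A B :: "nat set" and H R :: "(nat \<times> nat) set" and r2 :: nat
      assume m: "(2*r1)^(2*r1) \<le> m" and g: "good \<alpha> r1 m A B H"
        and r2: "real r2 \<le> \<alpha> ^ 5 * real r1 / ln (real r1)"
        and HR: "H \<subseteq> R" and reg: "bip_regular A B R (r1 + r2)"
      have cA: "card A = m" and cB: "card B = m" using g unfolding good_def by auto
      have "(1::nat) \<le> (2*r1)^(2*r1)" using r1 by simp
      then have m1: "m \<ge> 1" using m by linarith
      have k1: "r1 + r2 \<ge> 1" using r1 by simp
      have "real (card (one_factorizations A B R)) * real (r1+r2) ^ (r1+r2)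
          \<ge> fact (r1+r2) ^ m * exp (- real ((r1+r2) * m))"
        by (rule factorizations_bound[OF reg k1 cA cB m1])
      then show "real (card (one_factorizations A B R)) \<ge> ((real r1 - real r2) / exp 2) ^ ((r1 - r2) * m)"
        using final_bound[OF r1 _ _ r2 m] \<alpha> by blast
    qed
  qed
qed

end
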